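(* Let $P$ be a program and $M$ a mode for $P$. If (i) $P$ is linear, (ii) $P$ is safe w.r.t. $M$, (iii) $P$ satisfies $M$, and (iv) the non-unit clauses of $P$ are pairwise mutually exclusive w.r.t. $M$, then $P$ is semideterministic w.r.t. $M$.
   Context: Syntax. Predicate symbols $\mathit{true}$, $=$, $\neq$ are basic, all others non-basic; the set of function symbols is infinite. Basic atoms: $\mathit{true}$, $t_1=t_2$, $t_1\neq t_2$ (disequation); non-basic atoms: $p(t_1,\dots,t_m)$ with $p$ non-basic. A goal is a conjunction of atoms ("," associative, neutral element $\mathit{true}$); a goal containing only basic atoms is basic. A clause $C$ is $A\leftarrow G$ with non-basic head $hd(C)$ and body $bd(C)$; it is a unit clause iff its body is a basic goal. A program is a set of clauses; it is linear iff every clause has at most one non-basic atom in its body. All mgu's are relevant and idempotent. A variable $X$ is a local variable of goal $G$ in clause $H\leftarrow G_1,G,G_2$ iff $X\in vars(G)-vars(H,G_1,G_2)$. Operational semantics (program $P$): (1) $(t_1=t_2,G)\longmapsto_P G\vartheta$ if $t_1,t_2$ unify with mgu $\vartheta$; (2) $(t_1\neq t_2,G)\longmapsto_P G$ if $t_1,t_2$ are not unifiable; (3) $(A,G)\longmapsto_P(bd(C),G)\vartheta$ if $A$ is non-basic, $C$ is a renamed apart clause of $P$ and $\vartheta$ an mgu of $A$ and $hd(C)$ — a step "using $C$". $\longmapsto^*_P$ is the reflexive-transitive closure. For $C\in P$ and a goal $(A_0,G_0)$ with $A_0$ non-basic, $(A_0,G_0)\Rightarrow_C(A_n,G_n)$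 iff there is a derivation $(A_0,G_0)\longmapsto_P\cdots\longmapsto_P(A_n,G_n)$ with $n>0$, whose first step uses $C$, with $A_i$ basic for $i=1,\dots,n-1$, and either $A_n$ non-basic or $(A_n,G_n)$ equal to $\mathit{true}$. $G_0\Rightarrow^*_P G_n$ iff $G_0\Rightarrow_{C_1}\cdots\Rightarrow_{C_n}G_n$ for some clauses $C_1,\dots,C_n$ of $P$ ($n\ge0$). Semideterminism. $P$ is semideterministic for a non-basic atom $A$ iff for each goal $G$ with $A\Rightarrow^*_P G$ there is at most one clause $C$ such that $G\Rightarrow_C G'$ for some goal $G'$ different from $\mathit{true}$. $P$ is semideterministic w.r.t. $M$ iff it is semideterministic for every non-basic atom satisfying $M$. Modes. A mode for non-basic $p$ of arity $h$ is $p(m_1,\dots,m_h)$, $m_i\in\{+,?\}$; $t_i$ is an input argument iff $m_i=+$; variables in input arguments are input variables. A mode for a program contains exactly one mode per non-basic predicate occurring in it. An atom satisfies $M$ iff $M$ has a mode for its predicate and its input arguments are ground. $P$ satisfies $M$ iff for every non-basic $A_0$ satisfying $M$ and every non-basic $A$ and goal $G$ with $A_0\longmapsto^*_P(A,G)$, $A$ satisfies $M$. A clause is safe w.r.t. $M$ iff every variable of every disequation in its body is an input variable of its head or a local variable of that disequation in the clause; a program is safe iff all its clauses are. Satisfiability. A ground basic goal holds iff each of its atoms is $\mathit{true}$, $t=t$, or $t_1\neq t_2$ with $t_1,t_2$ distinct ground terms. For a set $V$ of variables, a conjunction $D$ of disequations is satisfiable w.r.t. $V$ iff there is a ground substitution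 $\sigma$ with domain $V$ such that every ground instance of $D\sigma$ holds. Guard. $grd(C)$ is $bd(C)$ if all atoms of $bd(C)$ are disequations, and otherwise the (possibly empty) conjunction of the disequations of $bd(C)$ to the left of the leftmost atom which is not a disequation. Mutual exclusion. Let $C_1: p(t_1,u_1)\leftarrow G_1$ and $C_2: p(t_2,u_2)\leftarrow G_2$ be renamed apart clauses, where $t_1,t_2$ are the tuples of input arguments of $p$ under $M$ and $u_1,u_2$ the remaining arguments. $C_1,C_2$ are mutually exclusive w.r.t. $M$ iff either $t_1,t_2$ are not unifiable, or they are unifiable via an mgu $\vartheta$ and $(grd(C_1),grd(C_2))\vartheta$ is not satisfiable w.r.t. $vars(t_1,t_2)$ (empty tuples are unifiable via the identity substitution). *)

theory Defs
  imports Main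
begin

datatype ('f, 'v) trm = Var 'v | Fn 'f "('f, 'v) trm list"

(* atoms. The basic atom true is the neutral element of ",", so it is
   represented by the empty goal and not as an atom. *)
datatype ('f, 'p, 'v) atm =
    Eq "('f, 'v) trm" "('f, 'v) trm"
  | Neq "('f, 'v) trm" "('f, 'v) trm"
  | Pred 'p "('f, 'v) trm list"

type_synonym ('f, 'p, 'v) goal = "('f, 'p, 'v) atm list"

(* clause  p(ts) <- body ; the head is non-basic by construction *)
datatype ('f, 'p, 'v) clause = Clause 'p "('f, 'v) trm list" "('f, 'p, 'v) goal"

type_synonym ('f, 'p, 'v) program = "('f, 'p, 'v) clause set"

fun hd_cl :: "('f, 'p, 'v) clause \<Rightarrow> ('f, 'p, 'v) atm" where
  "hd_cl (Clause p ts B) = Pred p ts"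

fun bd_cl :: "('f, 'p, 'v) clause \<Rightarrow> ('f, 'p, 'v) goal" where
  "bd_cl (Clause p ts B) = B"

fun nonbasic :: "('f, 'p, 'v) atm \<Rightarrow> bool" where
  "nonbasic (Pred p ts) = True"
| "nonbasic _ = False"

fun is_diseq :: "('f, 'p, 'v) atm \<Rightarrow> bool" where
  "is_diseq (Neq s t) = True"
| "is_diseq _ = False"

definition basic_goal :: "('f, 'p, 'v) goal \<Rightarrow> bool" where
  "basic_goal G \<longleftrightarrow> (\<forall>A \<in> set G. \<not> nonbasic A)"

definition unit_clause :: "('f, 'p, 'v) clause \<Rightarrow> bool" where
  "unit_clause C \<longleftrightarrow> basic_goal (bd_cl C)"

definition linear :: "('f, 'p, 'v) program \<Rightarrow> bool" where
  "linear P \<longleftrightarrow> (\<forall>C \<in> P. length (filter nonbasic (bd_cl C)) \<le> 1)"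

fun vars_trm :: "('f, 'v) trm \<Rightarrow> 'v set" where
  "vars_trm (Var x) = {x}"
| "vars_trm (Fn f ts) = (\<Union>t \<in> set ts. vars_trm t)"

definition vars_trms :: "('f, 'v) trm list \<Rightarrow> 'v set" where
  "vars_trms ts = (\<Union>t \<in> set ts. vars_trm t)"

fun vars_atm :: "('f, 'p, 'v) atm \<Rightarrow> 'v set" where
  "vars_atm (Eq s t) = vars_trm s \<union> vars_trm t"
| "vars_atm (Neq s t) = vars_trm s \<union> vars_trm t"
| "vars_atm (Pred p ts) = vars_trms ts"

definition vars_goal :: "('f, 'p, 'v) goal \<Rightarrow> 'v set" where
  "vars_goal G = (\<Union>A \<in> set G. vars_atm A)"

definition vars_cl :: "('f, 'p, 'v) clause \<Rightarrow> 'v set" where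
  "vars_cl C = vars_atm (hd_cl C) \<union> vars_goal (bd_cl C)"

definition ground :: "('f, 'v) trm \<Rightarrow> bool" where
  "ground t \<longleftrightarrow> vars_trm t = {}"

type_synonym ('f, 'v) subst = "'v \<Rightarrow> ('f, 'v) trm"

fun tsubst :: "('f, 'v) subst \<Rightarrow> ('f, 'v) trm \<Rightarrow> ('f, 'v) trm" where
  "tsubst \<sigma> (Var x) = \<sigma> x"
| "tsubst \<sigma> (Fn f ts) = Fn f (map (tsubst \<sigma>) ts)"

fun asubst :: "('f, 'v) subst \<Rightarrow> ('f, 'p, 'v) atm \<Rightarrow> ('f, 'p, 'v) atm" where
  "asubst \<sigma> (Eq s t) = Eq (tsubst \<sigma> s) (tsubst \<sigma> t)"
| "asubst \<sigma> (Neq s t) = Neq (tsubst \<sigma> s) (tsubst \<sigma> t)"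
| "asubst \<sigma> (Pred p ts) = Pred p (map (tsubst \<sigma>) ts)"

definition gsubst :: "('f, 'v) subst \<Rightarrow> ('f, 'p, 'v) goal \<Rightarrow> ('f, 'p, 'v) goal" where
  "gsubst \<sigma> G = map (asubst \<sigma>) G"

fun csubst :: "('f, 'v) subst \<Rightarrow> ('f, 'p, 'v) clause \<Rightarrow> ('f, 'p, 'v) clause" where
  "csubst \<sigma> (Clause p ts B) = Clause p (map (tsubst \<sigma>) ts) (gsubst \<sigma> B)"

definition renaming :: "('f, 'v) subst \<Rightarrow> bool" where
  "renaming \<rho> \<longleftrightarrow> (\<exists>\<pi>. bij \<pi> \<and> (\<forall>x. \<rho> x = Var (\<pi> x)))"

definition subst_dom :: "('f, 'v) subst \<Rightarrow> 'v set" where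
  "subst_dom \<sigma> = {x. \<sigma> x \<noteq> Var x}"

definition subst_vars :: "('f, 'v) subst \<Rightarrow> 'v set" where
  "subst_vars \<sigma> = subst_dom \<sigma> \<union> (\<Union>x \<in> subst_dom \<sigma>. vars_trm (\<sigma> x))"

definition unifier :: "('f, 'v) subst \<Rightarrow> ('f, 'v) trm list \<Rightarrow> ('f, 'v) trm list \<Rightarrow> bool" where
  "unifier \<sigma> ss ts \<longleftrightarrow> map (tsubst \<sigma>) ss = map (tsubst \<sigma>) ts"

definition unifiable :: "('f, 'v) trm list \<Rightarrow> ('f, 'v) trm list \<Rightarrow> bool" where
  "unifiable ss ts \<longleftrightarrow> (\<exists>\<sigma>. unifier \<sigma> ss ts)"

definition is_mgu :: "('f, 'v) subst \<Rightarrow> ('f, 'v) trm list \<Rightarrow> ('f, 'v) trm list \<Rightarrow> bool" where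
  "is_mgu \<theta> ss ts \<longleftrightarrow> unifier \<theta> ss ts \<and>
     (\<forall>\<sigma>. unifier \<sigma> ss ts \<longrightarrow> (\<exists>\<delta>. \<forall>x. \<sigma> x = tsubst \<delta> (\<theta> x)))"

(* relevant and idempotent mgu (the only mgu's used) *)
definition rmgu :: "('f, 'v) subst \<Rightarrow> ('f, 'v) trm list \<Rightarrow> ('f, 'v) trm list \<Rightarrow> bool" where
  "rmgu \<theta> ss ts \<longleftrightarrow> is_mgu \<theta> ss ts \<and>
     (\<forall>x. tsubst \<theta> (\<theta> x) = \<theta> x) \<and>
     subst_vars \<theta> \<subseteq> vars_trms ss \<union> vars_trms ts"

inductive basic_step :: "('f, 'p, 'v) goal \<Rightarrow> ('f, 'p, 'v) goal \<Rightarrow> bool" where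
  eq:  "rmgu \<theta> [t1] [t2] \<Longrightarrow> basic_step (Eq t1 t2 # G) (gsubst \<theta> G)"
| neq: "\<not> unifiable [t1] [t2] \<Longrightarrow> basic_step (Neq t1 t2 # G) G"

inductive step_using ::
  "('f, 'p, 'v) program \<Rightarrow> ('f, 'p, 'v) clause \<Rightarrow> ('f, 'p, 'v) goal \<Rightarrow> ('f, 'p, 'v) goal \<Rightarrow> bool"
  for P where
  "\<lbrakk> C \<in> P; renaming \<rho>; csubst \<rho> C = Clause p us B;
     vars_cl (csubst \<rho> C) \<inter> vars_goal (Pred p ts # G) = {};
     rmgu \<theta> ts us \<rbrakk>
   \<Longrightarrow> step_using P C (Pred p ts # G) (gsubst \<theta> (B @ G))"

definition step :: "('f, 'p, 'v) program \<Rightarrow> ('f, 'p, 'v) goal \<Rightarrow> ('f, 'p, 'v) goal \<Rightarrow> bool" where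
  "step P G G' \<longleftrightarrow> basic_step G G' \<or> (\<exists>C. step_using P C G G')"

definition deriv_cl ::
  "('f, 'p, 'v) program \<Rightarrow> ('f, 'p, 'v) clause \<Rightarrow> ('f, 'p, 'v) goal \<Rightarrow> ('f, 'p, 'v) goal \<Rightarrow> bool" where
  "deriv_cl P C G G' \<longleftrightarrow>
     (\<exists>G1. step_using P C G G1 \<and> basic_step\<^sup>*\<^sup>* G1 G' \<and>
           (G' = [] \<or> nonbasic (hd G')))"

definition derivs :: "('f, 'p, 'v) program \<Rightarrow> ('f, 'p, 'v) goal \<Rightarrow> ('f, 'p, 'v) goal \<Rightarrow> bool" where
  "derivs P = (\<lambda>G G'. \<exists>C \<in> P. deriv_cl P C G G')\<^sup>*\<^sup>*"

definition semidet_for :: "('f, 'p, 'v) program \<Rightarrow> ('f, 'p, 'v) atm \<Rightarrow> bool" where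
  "semidet_for P A \<longleftrightarrow>
     (\<forall>G. derivs P [A] G \<longrightarrow>
        (\<forall>C1 \<in> P. \<forall>C2 \<in> P.
           (\<exists>G'. deriv_cl P C1 G G' \<and> G' \<noteq> []) \<longrightarrow>
           (\<exists>G'. deriv_cl P C2 G G' \<and> G' \<noteq> []) \<longrightarrow> C1 = C2))"

(* a mode: partial map from predicate symbols to argument modes; True = '+', False = '?' *)
type_synonym 'p mode = "'p \<Rightarrow> bool list option"

fun atm_satisfies :: "'p mode \<Rightarrow> ('f, 'p, 'v) atm \<Rightarrow> bool" where
  "atm_satisfies M (Pred p ts) =
     (\<exists>ms. M p = Some ms \<and> length ms = length ts \<and>
           (\<forall>i < length ts. ms ! i \<longrightarrow> ground (ts ! i)))"
| "atm_satisfies M _ = False"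

definition semidet :: "('f, 'p, 'v) program \<Rightarrow> 'p mode \<Rightarrow> bool" where
  "semidet P M \<longleftrightarrow> (\<forall>A. nonbasic A \<longrightarrow> atm_satisfies M A \<longrightarrow> semidet_for P A)"

definition nb_atoms_cl :: "('f, 'p, 'v) clause \<Rightarrow> ('f, 'p, 'v) atm set" where
  "nb_atoms_cl C = insert (hd_cl C) {A \<in> set (bd_cl C). nonbasic A}"

definition mode_for :: "'p mode \<Rightarrow> ('f, 'p, 'v) program \<Rightarrow> bool" where
  "mode_for M P \<longleftrightarrow>
     (\<forall>p. M p \<noteq> None \<longleftrightarrow> (\<exists>C \<in> P. \<exists>ts. Pred p ts \<in> nb_atoms_cl C)) \<and>
     (\<forall>C \<in> P. \<forall>p ts. Pred p ts \<in> nb_atoms_cl C \<longrightarrow>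
        (\<exists>ms. M p = Some ms \<and> length ms = length ts))"

definition prog_satisfies :: "('f, 'p, 'v) program \<Rightarrow> 'p mode \<Rightarrow> bool" where
  "prog_satisfies P M \<longleftrightarrow>
     (\<forall>A0 A G. nonbasic A0 \<longrightarrow> atm_satisfies M A0 \<longrightarrow> nonbasic A \<longrightarrow>
        (step P)\<^sup>*\<^sup>* [A0] (A # G) \<longrightarrow> atm_satisfies M A)"

fun input_args :: "'p mode \<Rightarrow> ('f, 'p, 'v) atm \<Rightarrow> ('f, 'v) trm list" where
  "input_args M (Pred p ts) =
     (case M p of None \<Rightarrow> [] | Some ms \<Rightarrow> map fst (filter snd (zip ts ms)))"
| "input_args M _ = []"

fun other_args :: "'p mode \<Rightarrow> ('f, 'p, 'v) atm \<Rightarrow> ('f, 'v) trm list" where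
  "other_args M (Pred p ts) =
     (case M p of None \<Rightarrow> ts | Some ms \<Rightarrow> map fst (filter (Not \<circ> snd) (zip ts ms)))"
| "other_args M _ = []"

definition input_vars :: "'p mode \<Rightarrow> ('f, 'p, 'v) atm \<Rightarrow> 'v set" where
  "input_vars M A = vars_trms (input_args M A)"

definition local_var_of :: "('f, 'p, 'v) clause \<Rightarrow> nat \<Rightarrow> 'v \<Rightarrow> bool" where
  "local_var_of C i X \<longleftrightarrow>
     X \<in> vars_atm (bd_cl C ! i) \<and> X \<notin> vars_atm (hd_cl C) \<and>
     (\<forall>j < length (bd_cl C). j \<noteq> i \<longrightarrow> X \<notin> vars_atm (bd_cl C ! j))"

definition safe_cl :: "'p mode \<Rightarrow> ('f, 'p, 'v) clause \<Rightarrow> bool" where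
  "safe_cl M C \<longleftrightarrow>
     (\<forall>i < length (bd_cl C). is_diseq (bd_cl C ! i) \<longrightarrow>
        (\<forall>X \<in> vars_atm (bd_cl C ! i). X \<in> input_vars M (hd_cl C) \<or> local_var_of C i X))"

definition safe :: "('f, 'p, 'v) program \<Rightarrow> 'p mode \<Rightarrow> bool" where
  "safe P M \<longleftrightarrow> (\<forall>C \<in> P. safe_cl M C)"

fun holds_atm :: "('f, 'p, 'v) atm \<Rightarrow> bool" where
  "holds_atm (Eq s t) = (s = t)"
| "holds_atm (Neq s t) = (s \<noteq> t)"
| "holds_atm (Pred p ts) = False"

definition holds :: "('f, 'p, 'v) goal \<Rightarrow> bool" where
  "holds G \<longleftrightarrow> (\<forall>A \<in> set G. holds_atm A)"

definition satisfiable_wrt :: "('f, 'p, 'v) goal \<Rightarrow> 'v set \<Rightarrow> bool" where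
  "satisfiable_wrt D V \<longleftrightarrow>
     (\<exists>\<sigma>. (\<forall>x \<in> V. ground (\<sigma> x)) \<and> (\<forall>x. x \<notin> V \<longrightarrow> \<sigma> x = Var x) \<and>
          (\<forall>\<tau>. (\<forall>x. ground (\<tau> x)) \<longrightarrow> holds (gsubst \<tau> (gsubst \<sigma> D))))"

definition grd :: "('f, 'p, 'v) clause \<Rightarrow> ('f, 'p, 'v) goal" where
  "grd C = (if (\<forall>A \<in> set (bd_cl C). is_diseq A) then bd_cl C
            else takeWhile is_diseq (bd_cl C))"

fun pred_of :: "('f, 'p, 'v) clause \<Rightarrow> 'p" where
  "pred_of (Clause p ts B) = p"

(* mutual exclusion of two renamed apart clauses of the same predicate *)
definition mut_excl_ra :: "'p mode \<Rightarrow> ('f, 'p, 'v) clause \<Rightarrow> ('f, 'p, 'v) clause \<Rightarrow> bool" where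
  "mut_excl_ra M C1 C2 \<longleftrightarrow>
     (let t1 = input_args M (hd_cl C1); t2 = input_args M (hd_cl C2) in
       \<not> unifiable t1 t2 \<or>
       (\<exists>\<theta>. rmgu \<theta> t1 t2 \<and>
            \<not> satisfiable_wrt (gsubst \<theta> (grd C1 @ grd C2)) (vars_trms t1 \<union> vars_trms t2)))"

definition mut_excl :: "'p mode \<Rightarrow> ('f, 'p, 'v) clause \<Rightarrow> ('f, 'p, 'v) clause \<Rightarrow> bool" where
  "mut_excl M C1 C2 \<longleftrightarrow>
     (\<forall>\<rho>1 \<rho>2. renaming \<rho>1 \<longrightarrow> renaming \<rho>2 \<longrightarrow>
        vars_cl (csubst \<rho>1 C1) \<inter> vars_cl (csubst \<rho>2 C2) = {} \<longrightarrow>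
        mut_excl_ra M (csubst \<rho>1 C1) (csubst \<rho>2 C2))"

end

theory Submission
  imports Defs
begin



lemma vars_tsubst: "vars_trm (tsubst \<sigma> t) = (\<Union>x \<in> vars_trm t. vars_trm (\<sigma> x))"
  by (induction t) auto

lemma tsubst_comp: "tsubst \<sigma> (tsubst \<theta> t) = tsubst (\<lambda>x. tsubst \<sigma> (\<theta> x)) t"
  by (induction t) auto

lemma tsubst_cong: "(\<And>x. x \<in> vars_trm t \<Longrightarrow> \<sigma> x = \<sigma>' x) \<Longrightarrow> tsubst \<sigma> t = tsubst \<sigma>' t"
  by (induction t) auto

lemma tsubst_Var[simp]: "tsubst Var t = t"
  by (induction t) (auto simp: map_idI)

lemma ground_tsubst: "ground (tsubst \<sigma> t) \<longleftrightarrow> (\<forall>x \<in> vars_trm t. ground (\<sigma> x))"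
  by (auto simp: ground_def vars_tsubst)

lemma tsubst_ground: "ground t \<Longrightarrow> tsubst \<sigma> t = t"
  by (metis empty_iff ground_def tsubst_Var tsubst_cong)

lemma finite_vars_trm[simp]: "finite (vars_trm t)"
  by (induction t) auto

lemma finite_vars_atm[simp]: "finite (vars_atm A)"
  by (cases A) (auto simp: vars_trms_def)

lemma finite_vars_cl: "finite (vars_cl C)"
  by (cases C) (auto simp: vars_cl_def vars_goal_def vars_trms_def)

lemma nonbasic_asubst[simp]: "nonbasic (asubst \<sigma> A) = nonbasic A"
  by (cases A) auto

lemma is_diseq_asubst[simp]: "is_diseq (asubst \<sigma> A) = is_diseq A"
  by (cases A) auto

lemma count_gsubst[simp]: "length (filter nonbasic (gsubst \<sigma> G)) = length (filter nonbasic G)"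
  by (induction G) (auto simp: gsubst_def)

lemma map_filter_zip: "map f (map fst (filter snd (zip xs ms))) = map fst (filter snd (zip (map f xs) ms))"
  by (induction xs arbitrary: ms) (auto split: list.splits simp: zip_Cons1)

lemma set_filter_zip: "set (map fst (filter snd (zip xs ms))) \<subseteq> set xs"
  by (auto dest: set_zip_leftD)

lemma set_filter_zip2: "t \<in> set (map fst (filter snd (zip xs ms))) \<Longrightarrow> \<exists>i < length xs. i < length ms \<and> ms ! i \<and> t = xs ! i"
  by (auto simp: set_zip)

lemma input_args_asubst: "input_args M (asubst \<sigma> A) = map (tsubst \<sigma>) (input_args M A)"
  by (cases A) (auto split: option.splits simp: map_filter_zip[symmetric])

lemma vars_input_args: "vars_trms (input_args M (Pred p ts)) \<subseteq> vars_trms ts"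
  using set_filter_zip[of ts] by (auto simp: vars_trms_def split: option.splits)

lemma hd_csubst: "hd_cl (csubst \<sigma> C) = asubst \<sigma> (hd_cl C)"
  by (cases C) auto

lemma bd_csubst: "bd_cl (csubst \<sigma> C) = gsubst \<sigma> (bd_cl C)"
  by (cases C) auto

lemma pred_csubst: "pred_of (csubst \<sigma> C) = pred_of C"
  by (cases C) auto

lemma takeWhile_map_inv: "(\<And>x. P (f x) = P x) \<Longrightarrow> takeWhile P (map f xs) = map f (takeWhile P xs)"
  by (induction xs) auto

lemma grd_csubst: "grd (csubst \<sigma> C) = gsubst \<sigma> (grd C)"
  by (auto simp: grd_def bd_csubst gsubst_def takeWhile_map_inv)

lemma grd_diseq: "A \<in> set (grd C) \<Longrightarrow> \<exists>a b. A = Neq a b"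
  by (auto simp: grd_def split: if_splits dest: set_takeWhileD elim!: is_diseq.elims)

lemma grd_sub: "set (grd C) \<subseteq> set (bd_cl C)"
  by (auto simp: grd_def dest: set_takeWhileD)

lemma asubst_Var[simp]: "asubst Var A = A"
  by (cases A) (auto simp: map_idI)

lemma csubst_Var[simp]: "csubst Var C = C"
  by (cases C) (auto simp: gsubst_def map_idI)

lemma renaming_inv: "renaming \<rho> \<Longrightarrow> \<exists>\<rho>'. \<forall>t. tsubst \<rho>' (tsubst \<rho> t) = t"
proof -
  assume "renaming \<rho>"
  then obtain \<pi> where b: "bij \<pi>" and r: "\<forall>x. \<rho> x = Var (\<pi> x)" by (auto simp: renaming_def)
  show ?thesis
  proof (rule exI[of _ "\<lambda>x. Var (inv \<pi> x)"], rule allI)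
    fix t
    have e: "(\<lambda>x. tsubst (\<lambda>x. Var (inv \<pi> x)) (\<rho> x)) = Var"
    proof
      fix x show "tsubst (\<lambda>x. Var (inv \<pi> x)) (\<rho> x) = Var x"
        using r b bij_is_inj inv_f_f by (metis tsubst.simps(1))
    qed
    show "tsubst (\<lambda>x. Var (inv \<pi> x)) (tsubst \<rho> t) = t"
      unfolding tsubst_comp e by simp
  qed
qed

lemma renaming_ex:
  assumes inf: "infinite (UNIV :: 'v set)" and fS: "finite (S :: 'v set)" and fV: "finite (V :: 'v set)"
  shows "\<exists>\<pi>. bij \<pi> \<and> \<pi> ` S \<inter> V = {}"
proof -
  have "infinite (UNIV - (S \<union> V))" using inf fS fV by auto
  then obtain T where fT: "finite T" and cT: "card T = card S" and sT: "T \<subseteq> UNIV - (S \<union> V)"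
    using infinite_arbitrarily_large by blast
  obtain f where f: "bij_betw f S T" using finite_same_card_bij[OF fS fT] cT by auto
  define \<pi> where "\<pi> x = (if x \<in> S then f x else if x \<in> T then inv_into S f x else x)" for x
  have ST: "S \<inter> T = {}" using sT by auto
  have b1: "bij_betw \<pi> S T" by (rule bij_betw_cong[THEN iffD2, OF _ f]) (simp add: \<pi>_def)
  have b2: "bij_betw \<pi> T S"
  proof -
    have "bij_betw (inv_into S f) T S" using f by (rule bij_betw_inv_into)
    then show ?thesis by (rule bij_betw_cong[THEN iffD2, rotated]) (use ST in \<open>auto simp: \<pi>_def\<close>)
  qed
  have b3: "bij_betw \<pi> (UNIV - (S \<union> T)) (UNIV - (S \<union> T))"
    unfolding bij_betw_def inj_on_def \<pi>_def by auto
  have "bij_betw \<pi> (S \<union> T \<union> (UNIV - (S \<union> T))) (T \<union> S \<union> (UNIV - (S \<union> T)))"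
    by (rule bij_betw_combine[OF bij_betw_combine[OF b1 b2] b3]) (use ST in auto)
  moreover have "T \<union> S \<union> (UNIV - (S \<union> T)) = UNIV" "S \<union> T \<union> (UNIV - (S \<union> T)) = UNIV" by auto
  ultimately have "bij \<pi>" by (simp only:)
  moreover have "\<pi> ` S \<inter> V = {}" using b1 sT by (auto simp: bij_betw_def)
  ultimately show ?thesis by blast
qed



abbreviation cnt :: "('f, 'p, 'v) goal \<Rightarrow> nat" where
  "cnt G \<equiv> length (filter nonbasic G)"

lemma neq_prefix:
  "basic_step\<^sup>*\<^sup>* Xs G' \<Longrightarrow> G' = [] \<or> nonbasic (hd G') \<Longrightarrow> A \<in> set (takeWhile is_diseq Xs)
   \<Longrightarrow> \<exists>s t. A = Neq s t \<and> \<not> unifiable [s] [t]"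
proof (induction Xs)
  case Nil then show ?case by simp
next
  case (Cons X Xs)
  from Cons.prems(3) have d: "is_diseq X" by (auto split: if_splits)
  then obtain s t where X: "X = Neq s t" by (cases X) auto
  have "G' \<noteq> X # Xs" using Cons.prems(2) X by auto
  then obtain Y where Y: "basic_step (X # Xs) Y" "basic_step\<^sup>*\<^sup>* Y G'"
    using Cons.prems(1) by (metis converse_rtranclpE)
  from Y(1) X have Yr: "Y = Xs" "\<not> unifiable [s] [t]" by (auto elim: basic_step.cases)
  show ?case
  proof (cases "A = X")
    case True then show ?thesis using X Yr by auto
  next
    case False
    then have "A \<in> set (takeWhile is_diseq Xs)" using Cons.prems(3) d by auto
    then show ?thesis using Cons.IH Y(2) Yr Cons.prems(2) by auto
  qed
qed

lemma basic_step_cnt: "basic_step G G' \<Longrightarrow> cnt G' \<le> cnt G"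
  by (induction rule: basic_step.induct) auto

lemma basic_steps_cnt: "basic_step\<^sup>*\<^sup>* G G' \<Longrightarrow> cnt G' \<le> cnt G"
  by (induction rule: rtranclp_induct) (auto dest: basic_step_cnt)

lemma step_using_cnt:
  assumes "step_using P C G G1" "cnt G \<le> 1"
  shows "cnt G1 \<le> cnt (bd_cl C)"
  using assms
proof (induction rule: step_using.induct)
  case (1 C \<rho> p us B ts G \<theta>)
  have "B = gsubst \<rho> (bd_cl C)" using 1(3) bd_csubst[of \<rho> C] by simp
  then show ?case using 1(6) by (simp add: gsubst_def[symmetric])
qed

lemma count_gsubst': "length (filter nonbasic (map (asubst \<sigma>) G)) = length (filter nonbasic G)"
  using count_gsubst[of \<sigma> G] by (simp add: gsubst_def)

lemma derivs_cnt:
  assumes "linear P" "derivs P [A] G" shows "cnt G \<le> 1"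
  using assms(2) unfolding derivs_def
proof (induction rule: rtranclp_induct)
  case base then show ?case by (cases "nonbasic A") auto
next
  case (step G G')
  then obtain C G1 where C: "C \<in> P" "step_using P C G G1" "basic_step\<^sup>*\<^sup>* G1 G'"
    by (auto simp: deriv_cl_def)
  have "cnt G1 \<le> cnt (bd_cl C)" using step_using_cnt[OF C(2) step.IH] .
  also have "\<dots> \<le> 1" using assms(1) C(1) by (auto simp: linear_def)
  finally show ?case using basic_steps_cnt[OF C(3)] by simp
qed

lemma unit_deriv:
  assumes "linear P" "derivs P [A] G" "deriv_cl P C G G'" "unit_clause C"
  shows "G' = []"
proof -
  obtain G1 where C: "step_using P C G G1" "basic_step\<^sup>*\<^sup>* G1 G'" "G' = [] \<or> nonbasic (hd G')"
    using assms(3) by (auto simp: deriv_cl_def)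
  have "cnt (bd_cl C) = 0" using assms(4) by (auto simp: unit_clause_def basic_goal_def filter_empty_conv)
  then have "cnt G1 = 0" using step_using_cnt[OF C(1) derivs_cnt[OF assms(1,2)]] by simp
  then have "cnt G' = 0" using basic_steps_cnt[OF C(2)] by simp
  then show ?thesis using C(3) by (cases G') auto
qed

lemma derivs_steps: "derivs P G G' \<Longrightarrow> (step P)\<^sup>*\<^sup>* G G'"
  unfolding derivs_def
proof (induction rule: rtranclp_induct)
  case (step G1 G2)
  then obtain C G3 where "step_using P C G1 G3" "basic_step\<^sup>*\<^sup>* G3 G2" by (auto simp: deriv_cl_def)
  then have "(step P)\<^sup>*\<^sup>* G1 G2"
    by (metis (no_types, lifting) converse_rtranclp_into_rtranclp mono_rtranclp step_def)
  then show ?case using step.IH by simp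
qed simp



lemma vars_trms_map: "vars_trms (map (tsubst \<sigma>) ts) = (\<Union>x \<in> vars_trms ts. vars_trm (\<sigma> x))"
  by (auto simp: vars_trms_def vars_tsubst)

lemma vars_atm_asubst: "vars_atm (asubst \<sigma> A) = (\<Union>x \<in> vars_atm A. vars_trm (\<sigma> x))"
  by (cases A) (auto simp: vars_trms_map vars_tsubst)

lemma unif_ren:
  assumes "renaming \<rho>" "\<not> unifiable [tsubst \<rho> s] [tsubst \<rho> t]"
  shows "\<not> unifiable [s] [t]"
proof
  assume "unifiable [s] [t]"
  then obtain \<upsilon> where u: "tsubst \<upsilon> s = tsubst \<upsilon> t" by (auto simp: unifiable_def unifier_def)
  obtain \<rho>' where r: "\<forall>t. tsubst \<rho>' (tsubst \<rho> t) = t" using renaming_inv[OF assms(1)] by blast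
  have "tsubst (\<lambda>x. tsubst \<upsilon> (\<rho>' x)) (tsubst \<rho> s) = tsubst (\<lambda>x. tsubst \<upsilon> (\<rho>' x)) (tsubst \<rho> t)"
    by (simp add: tsubst_comp[symmetric] r u)
  then show False using assms(2) by (auto simp: unifiable_def unifier_def)
qed

lemma takeWhile_append_sub: "set (takeWhile P xs) \<subseteq> set (takeWhile P (xs @ ys))"
  by (induction xs) auto

lemma rmgu_rel: "rmgu \<theta> ss ts \<Longrightarrow> x \<notin> vars_trms ss \<Longrightarrow> x \<notin> vars_trms ts \<Longrightarrow> \<theta> x = Var x"
  by (auto simp: rmgu_def subst_vars_def subst_dom_def)

lemma guard_match:
  assumes su: "step_using P C (Pred p ts # G) G1" and bs: "basic_step\<^sup>*\<^sup>* G1 G'"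
    and fin: "G' = [] \<or> nonbasic (hd G')"
    and safe: "safe_cl M C" and sat: "atm_satisfies M (Pred p ts)" and nu: "\<not> unit_clause C"
  shows "\<exists>\<mu>. (\<forall>x\<in>vars_trms (input_args M (hd_cl C)). ground (\<mu> x)) \<and>
     (\<forall>x. x \<notin> vars_trms (input_args M (hd_cl C)) \<longrightarrow> \<mu> x = Var x) \<and>
     map (tsubst \<mu>) (input_args M (hd_cl C)) = input_args M (Pred p ts) \<and>
     (\<forall>a b. Neq a b \<in> set (grd C) \<longrightarrow> \<not> unifiable [tsubst \<mu> a] [tsubst \<mu> b])"
proof -
  from su obtain \<rho> us B \<theta> where
    ren: "renaming \<rho>" and cs: "csubst \<rho> C = Clause p us B"
    and disj: "vars_cl (csubst \<rho> C) \<inter> vars_goal (Pred p ts # G) = {}"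
    and mgu: "rmgu \<theta> ts us" and G1: "G1 = gsubst \<theta> (B @ G)"
    by (cases rule: step_using.cases) auto
  obtain \<pi> where bij: "bij \<pi>" and r: "\<And>x. \<rho> x = Var (\<pi> x)" using ren by (auto simp: renaming_def)
  obtain us0 B0 where C: "C = Clause p us0 B0" using cs by (cases C) auto
  have us: "us = map (tsubst \<rho>) us0" and B: "B = gsubst \<rho> B0" using cs C by auto
  obtain ms where ms: "M p = Some ms" "length ms = length ts" "\<forall>i < length ts. ms ! i \<longrightarrow> ground (ts ! i)"
    using sat by auto
  define tC where "tC = input_args M (hd_cl C)"
  define Tin where "Tin = input_args M (Pred p ts)"
  have tC: "tC = map fst (filter snd (zip us0 ms))" using C ms by (simp add: tC_def)
  have Tin: "Tin = map fst (filter snd (zip ts ms))" using ms by (simp add: Tin_def)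
  have gTin: "\<forall>t\<in>set Tin. ground t"
  proof
    fix t assume "t \<in> set Tin"
    then have "t \<in> set (map fst (filter snd (zip ts ms)))" using Tin by simp
    then have "\<exists>i<length ts. i < length ms \<and> ms ! i \<and> t = ts ! i" by (rule set_filter_zip2)
    then obtain i where "i < length ts" "ms ! i" "t = ts ! i" by blast
    then show "ground t" using ms(3) by auto
  qed
  have unif: "map (tsubst \<theta>) ts = map (tsubst \<theta>) us" using mgu by (simp add: rmgu_def is_mgu_def unifier_def)
  have key1: "map (tsubst \<theta>) (map (tsubst \<rho>) tC) = Tin"
  proof -
    have "map (tsubst \<theta>) (map (tsubst \<rho>) tC) = map fst (filter snd (zip (map (tsubst \<theta>) us) ms))"
      unfolding tC map_filter_zip us by simp
    also have "\<dots> = map (tsubst \<theta>) Tin" unfolding unif[symmetric] Tin map_filter_zip ..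
    also have "\<dots> = Tin" using gTin by (simp add: tsubst_ground map_idI)
    finally show ?thesis .
  qed
  define \<mu> where "\<mu> y = (if y \<in> vars_trms tC then tsubst \<theta> (\<rho> y) else Var y)" for y
  have agree: "tsubst \<mu> t = tsubst \<theta> (tsubst \<rho> t)" if "t \<in> set tC" for t
    unfolding tsubst_comp by (rule tsubst_cong) (use that in \<open>auto simp: \<mu>_def vars_trms_def\<close>)
  have m1: "map (tsubst \<mu>) tC = Tin" using key1 agree by (simp cong: map_cong)
  have m2: "ground (\<mu> y)" if "y \<in> vars_trms tC" for y
  proof -
    obtain t where t: "t \<in> set tC" "y \<in> vars_trm t" using \<open>y \<in> vars_trms tC\<close> unfolding vars_trms_def by blast
    have "tsubst \<theta> (tsubst \<rho> t) \<in> set Tin" using key1 t(1) by force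
    then have "ground (tsubst \<theta> (tsubst \<rho> t))" using gTin by blast
    then show ?thesis using t(2) that by (simp add: tsubst_comp ground_tsubst \<mu>_def)
  qed
  have m3: "\<mu> y = Var y" if "y \<notin> vars_trms tC" for y using that by (simp add: \<mu>_def)
  have tCsub: "vars_trms tC \<subseteq> vars_trms us0" unfolding tC_def C using vars_input_args by simp
  have grdC: "grd C = takeWhile is_diseq B0"
  proof -
    obtain A where "A \<in> set B0" "nonbasic A" using nu C by (auto simp: unit_clause_def basic_goal_def)
    moreover have "\<not> is_diseq A" using \<open>nonbasic A\<close> by (cases A) auto
    ultimately have "\<not> (\<forall>A \<in> set B0. is_diseq A)" by blast
    then show ?thesis using C unfolding grd_def by auto
  qed
  have m4: "\<not> unifiable [tsubst \<mu> a] [tsubst \<mu> b]" if ab: "Neq a b \<in> set (grd C)" for a b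
  proof -
    have inB0: "Neq a b \<in> set (takeWhile is_diseq B0)" using ab grdC by simp
    have "Neq (tsubst \<theta> (tsubst \<rho> a)) (tsubst \<theta> (tsubst \<rho> b)) \<in> set (takeWhile is_diseq G1)"
    proof -
      have e: "G1 = map (asubst \<theta> \<circ> asubst \<rho>) B0 @ map (asubst \<theta>) G"
        by (simp add: G1 B gsubst_def)
      have "takeWhile is_diseq (map (asubst \<theta> \<circ> asubst \<rho>) B0) = map (asubst \<theta> \<circ> asubst \<rho>) (takeWhile is_diseq B0)"
        by (rule takeWhile_map_inv) simp
      moreover have "set (takeWhile is_diseq (map (asubst \<theta> \<circ> asubst \<rho>) B0)) \<subseteq> set (takeWhile is_diseq G1)"
        unfolding e by (rule takeWhile_append_sub)
      ultimately show ?thesis using inB0 by force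
    qed
    then have nu1: "\<not> unifiable [tsubst \<theta> (tsubst \<rho> a)] [tsubst \<theta> (tsubst \<rho> b)]"
      using neq_prefix[OF bs fin] by fastforce
    have yy: "tsubst \<theta> (\<rho> y) = tsubst \<rho> (\<mu> y)" if y: "y \<in> vars_atm (Neq a b)" for y
    proof -
      obtain i where i: "i < length B0" "B0 ! i = Neq a b" using inB0 set_takeWhileD by (metis in_set_conv_nth)
      have "y \<in> input_vars M (hd_cl C) \<or> local_var_of C i y"
        using safe i y C by (auto simp: safe_cl_def)
      then show ?thesis
      proof
        assume "y \<in> input_vars M (hd_cl C)"
        then have "y \<in> vars_trms tC" by (simp add: input_vars_def tC_def)
        then show ?thesis using m2 by (simp add: \<mu>_def tsubst_ground)
      next
        assume "local_var_of C i y"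
        then have ny: "y \<notin> vars_trms us0" and yB: "y \<in> vars_atm (B0 ! i)"
          using C by (auto simp: local_var_of_def)
        have "\<pi> y \<notin> vars_trms us" using ny bij by (auto simp: us vars_trms_map r bij_is_inj inj_eq)
        moreover have "\<pi> y \<in> vars_cl (csubst \<rho> C)"
          using yB i(1) by (auto simp: cs vars_cl_def vars_goal_def B gsubst_def vars_atm_asubst r intro!: bexI[of _ "B0 ! i"])
        then have "\<pi> y \<notin> vars_trms ts" using disj by (auto simp: vars_goal_def)
        ultimately have "\<theta> (\<pi> y) = Var (\<pi> y)" using rmgu_rel[OF mgu] by blast
        moreover have "\<mu> y = Var y" using ny tCsub m3 by blast
        ultimately show ?thesis by (simp add: r)
      qed
    qed
    have "tsubst \<theta> (tsubst \<rho> a) = tsubst \<rho> (tsubst \<mu> a)" "tsubst \<theta> (tsubst \<rho> b) = tsubst \<rho> (tsubst \<mu> b)"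
      unfolding tsubst_comp by (rule tsubst_cong; use yy in simp)+
    then show ?thesis using nu1 unif_ren[OF ren] by metis
  qed
  show ?thesis
    apply (rule exI[of _ \<mu>])
    using m1 m2 m3 m4 by (simp add: tC_def Tin_def)
qed



lemma vars_cl_csubst: "vars_cl (csubst \<sigma> C) = (\<Union>x \<in> vars_cl C. vars_trm (\<sigma> x))"
  by (cases C) (auto simp: vars_cl_def vars_goal_def gsubst_def vars_atm_asubst vars_trms_map)

lemma vars_input_cl: "vars_trms (input_args M (hd_cl C)) \<subseteq> vars_cl C"
  using vars_input_args by (cases C) (fastforce simp: vars_cl_def)

lemma vars_grd_cl: "Neq a b \<in> set (grd C) \<Longrightarrow> vars_trm a \<union> vars_trm b \<subseteq> vars_cl C"
  using grd_sub[of C] by (fastforce simp: vars_cl_def vars_goal_def)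

lemma asubst_absorb: "(\<And>t. tsubst \<sigma> (tsubst \<theta> t) = tsubst \<sigma> t) \<Longrightarrow> asubst \<sigma> (asubst \<theta> A) = asubst \<sigma> A"
  by (cases A) auto

lemma excl_contra:
  fixes C1 C2 :: "('f, 'p, 'v) clause"
  assumes inf: "infinite (UNIV :: 'v set)" and me: "mut_excl M C1 C2"
    and g1: "\<forall>x\<in>vars_trms (input_args M (hd_cl C1)). ground (\<mu>1 x)"
    and v1: "\<forall>x. x \<notin> vars_trms (input_args M (hd_cl C1)) \<longrightarrow> \<mu>1 x = Var x"
    and m1: "map (tsubst \<mu>1) (input_args M (hd_cl C1)) = T"
    and n1: "\<forall>a b. Neq a b \<in> set (grd C1) \<longrightarrow> \<not> unifiable [tsubst \<mu>1 a] [tsubst \<mu>1 b]"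
    and g2: "\<forall>x\<in>vars_trms (input_args M (hd_cl C2)). ground (\<mu>2 x)"
    and v2: "\<forall>x. x \<notin> vars_trms (input_args M (hd_cl C2)) \<longrightarrow> \<mu>2 x = Var x"
    and m2: "map (tsubst \<mu>2) (input_args M (hd_cl C2)) = T"
    and n2: "\<forall>a b. Neq a b \<in> set (grd C2) \<longrightarrow> \<not> unifiable [tsubst \<mu>2 a] [tsubst \<mu>2 b]"
  shows False
proof -
  obtain \<pi> where bij: "bij \<pi>" and dj: "\<pi> ` vars_cl C2 \<inter> vars_cl C1 = {}"
    using renaming_ex[OF inf finite_vars_cl finite_vars_cl] by blast
  define \<rho>2 :: "('f, 'v) subst" where "\<rho>2 x = Var (\<pi> x)" for x
  have ren2: "renaming \<rho>2" using bij by (auto simp: renaming_def \<rho>2_def)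
  have ren1: "renaming (Var :: ('f, 'v) subst)" by (auto simp: renaming_def intro: exI[of _ id])
  define C2' where "C2' = csubst \<rho>2 C2"
  have vC2': "vars_cl C2' = \<pi> ` vars_cl C2" by (auto simp: C2'_def vars_cl_csubst \<rho>2_def)
  have "mut_excl_ra M (csubst Var C1) C2'"
    using me ren1 ren2 dj vC2' unfolding mut_excl_def C2'_def by (metis csubst_Var inf_commute)
  then have mra: "mut_excl_ra M C1 C2'" by simp
  define t1 where "t1 = input_args M (hd_cl C1)"
  define tC2 where "tC2 = input_args M (hd_cl C2)"
  define t2 where "t2 = input_args M (hd_cl C2')"
  have t2: "t2 = map (tsubst \<rho>2) tC2" by (simp add: t2_def tC2_def C2'_def hd_csubst input_args_asubst)
  define \<sigma> where "\<sigma> x = (if x \<in> vars_cl C1 then \<mu>1 x else tsubst \<rho>2 (\<mu>2 (inv \<pi> x)))" for x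
  have s1: "\<sigma> x = \<mu>1 x" if "x \<in> vars_cl C1" for x using that by (simp add: \<sigma>_def)
  have s2: "\<sigma> (\<pi> y) = tsubst \<rho>2 (\<mu>2 y)" if "y \<in> vars_cl C2" for y
    using that dj bij by (auto simp: \<sigma>_def bij_is_inj)
  have gT: "\<forall>t\<in>set T. ground t"
    using m1 g1 by (auto simp: ground_tsubst vars_trms_def)
  have u1: "map (tsubst \<sigma>) t1 = T"
    unfolding m1[symmetric] t1_def
    by (rule map_cong[OF refl], rule tsubst_cong, use vars_input_cl s1 in \<open>force simp: vars_trms_def\<close>)
  have r2: "tsubst \<sigma> (tsubst \<rho>2 t) = tsubst \<rho>2 (tsubst \<mu>2 t)" if "vars_trm t \<subseteq> vars_cl C2" for t
    unfolding tsubst_comp by (rule tsubst_cong) (use that s2 in \<open>auto simp: \<rho>2_def\<close>)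
  have u2: "map (tsubst \<sigma>) t2 = T"
  proof -
    have "map (tsubst \<sigma>) t2 = map (tsubst \<rho>2) (map (tsubst \<mu>2) tC2)"
      unfolding t2 using r2 vars_input_cl[of M C2] by (auto simp: tC2_def vars_trms_def)
    also have "\<dots> = T" using m2 gT by (simp add: tC2_def tsubst_ground map_idI)
    finally show ?thesis .
  qed
  have unif: "unifier \<sigma> t1 t2" using u1 u2 by (simp add: unifier_def)
  then have "unifiable t1 t2" by (auto simp: unifiable_def)
  then obtain \<theta> where mgu: "rmgu \<theta> t1 t2"
    and nsat: "\<not> satisfiable_wrt (gsubst \<theta> (grd C1 @ grd C2')) (vars_trms t1 \<union> vars_trms t2)"
    using mra by (auto simp: mut_excl_ra_def t1_def t2_def Let_def)
  obtain \<delta> where dl: "\<forall>x. \<sigma> x = tsubst \<delta> (\<theta> x)" using mgu unif unfolding rmgu_def is_mgu_def by blast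
  have idem: "\<forall>x. tsubst \<theta> (\<theta> x) = \<theta> x" using mgu by (simp add: rmgu_def)
  have sx: "tsubst \<sigma> (\<theta> x) = \<sigma> x" for x
  proof -
    have "\<sigma> = (\<lambda>x. tsubst \<delta> (\<theta> x))" using dl by auto
    then show ?thesis using idem by (simp add: tsubst_comp[symmetric])
  qed
  have absorb: "tsubst \<sigma> (tsubst \<theta> t) = tsubst \<sigma> t" for t by (simp add: tsubst_comp sx)
  have vt2: "vars_trms t2 = \<pi> ` vars_trms tC2" by (auto simp: t2 vars_trms_map \<rho>2_def)
  have sat: "satisfiable_wrt (gsubst \<theta> (grd C1 @ grd C2')) (vars_trms t1 \<union> vars_trms t2)"
    unfolding satisfiable_wrt_def
  proof (intro exI conjI allI impI ballI)
    fix x assume "x \<in> vars_trms t1 \<union> vars_trms t2"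
    then show "ground (\<sigma> x)"
    proof
      assume "x \<in> vars_trms t1"
      then show ?thesis using g1 s1 vars_input_cl[of M C1] by (auto simp: t1_def)
    next
      assume "x \<in> vars_trms t2"
      then obtain y where y: "y \<in> vars_trms tC2" "x = \<pi> y" using vt2 by auto
      then show ?thesis using s2[of y] g2 vars_input_cl[of M C2] by (auto simp: tC2_def tsubst_ground)
    qed
  next
    fix x assume nx: "x \<notin> vars_trms t1 \<union> vars_trms t2"
    show "\<sigma> x = Var x"
    proof (cases "x \<in> vars_cl C1")
      case True then show ?thesis using nx v1 by (simp add: \<sigma>_def t1_def)
    next
      case False
      have "x = \<pi> (inv \<pi> x)" using bij by (simp add: bij_is_surj surj_f_inv_f)
      then have "inv \<pi> x \<notin> vars_trms tC2" using nx vt2 by auto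
      then have "\<mu>2 (inv \<pi> x) = Var (inv \<pi> x)" using v2 by (simp add: tC2_def)
      then show ?thesis using False \<open>x = \<pi> (inv \<pi> x)\<close> by (simp add: \<sigma>_def \<rho>2_def)
    qed
  next
    fix \<tau> :: "('f, 'v) subst" assume gt: "\<forall>x. ground (\<tau> x)"
    have e: "gsubst \<sigma> (gsubst \<theta> D) = gsubst \<sigma> D" for D :: "('f, 'p, 'v) goal"
      by (simp add: gsubst_def asubst_absorb absorb)
    have grd2: "grd C2' = gsubst \<rho>2 (grd C2)" by (simp add: C2'_def grd_csubst)
    show "holds (gsubst \<tau> (gsubst \<sigma> (gsubst \<theta> (grd C1 @ grd C2'))))"
      unfolding e holds_def
    proof
      fix A assume "A \<in> set (gsubst \<tau> (gsubst \<sigma> (grd C1 @ grd C2')))"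
      then obtain A0 where A0: "A0 \<in> set (grd C1 @ grd C2')" "A = asubst \<tau> (asubst \<sigma> A0)"
        by (auto simp: gsubst_def)
      from A0(1) have "A0 \<in> set (grd C1) \<or> A0 \<in> set (grd C2')" by simp
      then show "holds_atm A"
      proof
        assume a1: "A0 \<in> set (grd C1)"
        then obtain a b where ab: "A0 = Neq a b" using grd_diseq by blast
        have "tsubst \<sigma> a = tsubst \<mu>1 a" "tsubst \<sigma> b = tsubst \<mu>1 b"
          using vars_grd_cl[of a b C1] a1 ab s1 by (auto intro!: tsubst_cong)
        moreover have "tsubst \<tau> (tsubst \<mu>1 a) \<noteq> tsubst \<tau> (tsubst \<mu>1 b)"
          using n1 a1 ab by (auto simp: unifiable_def unifier_def)
        ultimately show ?thesis using A0(2) ab by simp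
      next
        assume "A0 \<in> set (grd C2')"
        then obtain A1 where a1: "A1 \<in> set (grd C2)" "A0 = asubst \<rho>2 A1" using grd2 by (auto simp: gsubst_def)
        then obtain a b where ab: "A1 = Neq a b" using grd_diseq by blast
        have "tsubst \<sigma> (tsubst \<rho>2 a) = tsubst \<rho>2 (tsubst \<mu>2 a)" "tsubst \<sigma> (tsubst \<rho>2 b) = tsubst \<rho>2 (tsubst \<mu>2 b)"
          using vars_grd_cl[of a b C2] a1 ab r2 by auto
        moreover have "tsubst \<tau> (tsubst \<rho>2 (tsubst \<mu>2 a)) \<noteq> tsubst \<tau> (tsubst \<rho>2 (tsubst \<mu>2 b))"
        proof
          assume "tsubst \<tau> (tsubst \<rho>2 (tsubst \<mu>2 a)) = tsubst \<tau> (tsubst \<rho>2 (tsubst \<mu>2 b))"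
          then have "unifier (\<lambda>x. tsubst \<tau> (\<rho>2 x)) [tsubst \<mu>2 a] [tsubst \<mu>2 b]"
            by (simp add: unifier_def tsubst_comp[symmetric])
          then show False using n2 a1 ab by (auto simp: unifiable_def)
        qed
        ultimately show ?thesis using A0(2) a1 ab by simp
      qed
    qed
  qed
  then show False using nsat by simp
qed

theorem proposition2:
  fixes P :: "('f, 'p, 'v) program" and M :: "'p mode"
  assumes "infinite (UNIV :: 'f set)"
    and "infinite (UNIV :: 'v set)"
    and "mode_for M P"
    and "linear P"
    and "safe P M"
    and "prog_satisfies P M"
    and "\<forall>C1 \<in> P. \<forall>C2 \<in> P. C1 \<noteq> C2 \<longrightarrow> \<not> unit_clause C1 \<longrightarrow> \<not> unit_clause C2 \<longrightarrow>
           pred_of C1 = pred_of C2 \<longrightarrow> mut_excl M C1 C2"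
  shows "semidet P M"
  unfolding semidet_def semidet_for_def
proof (intro allI impI ballI)
  fix A G C1 C2
  assume nA: "nonbasic A" and sA: "atm_satisfies M A" and dG: "derivs P [A] G"
    and C1: "C1 \<in> P" and C2: "C2 \<in> P"
    and d1: "\<exists>G'. deriv_cl P C1 G G' \<and> G' \<noteq> []" and d2: "\<exists>G'. deriv_cl P C2 G G' \<and> G' \<noteq> []"
  show "C1 = C2"
  proof (rule ccontr)
    assume ne: "C1 \<noteq> C2"
    obtain G1' where e1: "deriv_cl P C1 G G1'" "G1' \<noteq> []" using d1 by blast
    obtain G2' where e2: "deriv_cl P C2 G G2'" "G2' \<noteq> []" using d2 by blast
    have nu1: "\<not> unit_clause C1" using unit_deriv[OF assms(4) dG e1(1)] e1(2) by blast
    have nu2: "\<not> unit_clause C2" using unit_deriv[OF assms(4) dG e2(1)] e2(2) by blast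
    obtain G11 where f1: "step_using P C1 G G11" "basic_step\<^sup>*\<^sup>* G11 G1'" "G1' = [] \<or> nonbasic (hd G1')"
      using e1 by (auto simp: deriv_cl_def)
    obtain G22 where f2: "step_using P C2 G G22" "basic_step\<^sup>*\<^sup>* G22 G2'" "G2' = [] \<or> nonbasic (hd G2')"
      using e2 by (auto simp: deriv_cl_def)
    obtain p ts Gr \<rho> us B where G: "G = Pred p ts # Gr" and cs1: "csubst \<rho> C1 = Clause p us B"
      using f1(1) by (cases rule: step_using.cases) auto
    obtain \<rho>' us' B' where cs2: "csubst \<rho>' C2 = Clause p us' B'"
      using f2(1) G by (cases rule: step_using.cases) auto
    have pe: "pred_of C1 = pred_of C2" using cs1 cs2 pred_csubst by (metis pred_of.simps)
    have me: "mut_excl M C1 C2" using assms(7) C1 C2 ne nu1 nu2 pe by blast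
    have sat: "atm_satisfies M (Pred p ts)"
    proof -
      have "(step P)\<^sup>*\<^sup>* [A] (Pred p ts # Gr)" using derivs_steps[OF dG] G by simp
      moreover have "nonbasic (Pred p ts :: ('f, 'p, 'v) atm)" by simp
      ultimately show ?thesis using assms(6) nA sA unfolding prog_satisfies_def by blast
    qed
    have sf1: "safe_cl M C1" and sf2: "safe_cl M C2" using assms(5) C1 C2 by (auto simp: safe_def)
    obtain \<mu>1 where m1: "(\<forall>x\<in>vars_trms (input_args M (hd_cl C1)). ground (\<mu>1 x)) \<and>
     (\<forall>x. x \<notin> vars_trms (input_args M (hd_cl C1)) \<longrightarrow> \<mu>1 x = Var x) \<and>
     map (tsubst \<mu>1) (input_args M (hd_cl C1)) = input_args M (Pred p ts) \<and>
     (\<forall>a b. Neq a b \<in> set (grd C1) \<longrightarrow> \<not> unifiable [tsubst \<mu>1 a] [tsubst \<mu>1 b])"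
      using guard_match[OF f1(1)[unfolded G] f1(2,3) sf1 sat nu1] by blast
    obtain \<mu>2 where m2: "(\<forall>x\<in>vars_trms (input_args M (hd_cl C2)). ground (\<mu>2 x)) \<and>
     (\<forall>x. x \<notin> vars_trms (input_args M (hd_cl C2)) \<longrightarrow> \<mu>2 x = Var x) \<and>
     map (tsubst \<mu>2) (input_args M (hd_cl C2)) = input_args M (Pred p ts) \<and>
     (\<forall>a b. Neq a b \<in> set (grd C2) \<longrightarrow> \<not> unifiable [tsubst \<mu>2 a] [tsubst \<mu>2 b])"
      using guard_match[OF f2(1)[unfolded G] f2(2,3) sf2 sat nu2] by blast
    show False
      using excl_contra[OF assms(2) me, of \<mu>1 "input_args M (Pred p ts)" \<mu>2] m1 m2 by blast
  qed
qed

end
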